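(* Let $1\le R\le\lambda$, let $\sigma\in[R^{-1/2},1]$ be dyadic, let $\tau\subset S^1$ be an arc of aperture $\sigma^{-1}R^{-1/2}$, fix $(x,t)$ and fix $\tilde\omega\in\Theta_{\sigma,\tau}$. Then for any arcs $\theta_1,\theta_2\subset\tau$ (of aperture $R^{-1/2}$, identified with their centers), $$\Big|\tilde\omega\cdot\frac{\partial(u^\lambda_{\theta_1}(x,t),t)}{\partial(x,t)}-\tilde\omega\cdot\frac{\partial(u^\lambda_{\theta_2}(x,t),t)}{\partial(x,t)}\Big|\lesssim R^{-1}.$$
   Context: $\phi\in C^\infty(\mathbb R^3\times(\mathbb R^2\setminus\{0\}))$, $(x,t,\eta)\in\mathbb R^2\times\mathbb R\times\mathbb R^2$, is real-valued and homogeneous of degree 1 in $\eta$, with $\operatorname{rank}\partial^2_{x\eta}\phi=2$ on the relevant region and with derivatives $\partial^\alpha_\eta\partial^\beta_{x,t}\phi$ bounded by $1$ on $B_{\varepsilon_0}(0)\times B_{\varepsilon_0}((0,1))$ for $|\alpha|,|\beta|\le M$ ($M$ large). For a unit vector $\theta\in S^1$, $u_\theta(x,t):=\nabla_\eta\phi(x,t,\theta)$ and $u^\lambda_\theta(x,t)=\lambda u_\theta(x/\lambda,t/\lambda)$; $\frac{\partial(u^\lambda_\theta(x,t),t)}{\partial(x,t)}$ is the $3\times3$ Jacobian matrix of $(x,t)\mapsto(u^\lambda_\theta(x,t),t)$ and $\tilde\omega$ acts as a row vector. $\Theta_{\sigma,\tau}\subset\mathbb R^3$ is the rectangular box centered at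 the origin with side lengths $\sigma^2$ in direction $(\tau,0)$, $\sigma R^{-1/2}$ in direction $(\tau^\perp,0)$ and $R^{-1}$ in direction $(0,0,1)$, where $\tau$ also denotes the center of the arc. The implicit constant depends only on the derivative bounds of $\phi$. *)

theory Defs
  imports "HOL-Analysis.Analysis"
begin

text \<open>Iterated directional (Frechet) derivatives: the list v # vs means
  first differentiate along the directions vs, then along v.\<close>
primrec dderiv :: "'a::real_normed_vector list \<Rightarrow> ('a \<Rightarrow> real) \<Rightarrow> 'a \<Rightarrow> real" where
  "dderiv [] f = f"
| "dderiv (v # vs) f = (\<lambda>p. frechet_derivative (dderiv vs f) (at p) v)"

definition phiP :: "(real^2 \<Rightarrow> real \<Rightarrow> real^2 \<Rightarrow> real) \<Rightarrow> ((real^2) \<times> real) \<times> (real^2) \<Rightarrow> real" where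
  "phiP \<phi> p = \<phi> (fst (fst p)) (snd (fst p)) (snd p)"

text \<open>C^infinity on R^3 x (R^2 - {0}): derivatives of all orders exist there.\<close>
definition smooth_phase :: "(real^2 \<Rightarrow> real \<Rightarrow> real^2 \<Rightarrow> real) \<Rightarrow> bool" where
  "smooth_phase \<phi> \<longleftrightarrow>
     (\<forall>vs p. snd p \<noteq> 0 \<longrightarrow> dderiv vs (phiP \<phi>) differentiable (at p))"

definition homog1 :: "(real^2 \<Rightarrow> real \<Rightarrow> real^2 \<Rightarrow> real) \<Rightarrow> bool" where
  "homog1 \<phi> \<longleftrightarrow> (\<forall>x t \<eta> s. \<eta> \<noteq> 0 \<longrightarrow> s > 0 \<longrightarrow> \<phi> x t (s *\<^sub>R \<eta>) = s * \<phi> x t \<eta>)"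

definition e2 :: "real^2" where "e2 = vector [0, 1]"

definition region :: "real \<Rightarrow> (((real^2) \<times> real) \<times> (real^2)) set" where
  "region \<epsilon>0 = ball 0 \<epsilon>0 \<times> ball e2 \<epsilon>0"

text \<open>A coordinate
  direction with zero eta-part is an (x,t)-direction, one with zero
  (x,t)-part is an eta-direction.\<close>
definition deriv_bounds :: "nat \<Rightarrow> real \<Rightarrow> (real^2 \<Rightarrow> real \<Rightarrow> real^2 \<Rightarrow> real) \<Rightarrow> bool" where
  "deriv_bounds M \<epsilon>0 \<phi> \<longleftrightarrow>
     (\<forall>vs p. vs \<in> lists Basis
        \<and> length (filter (\<lambda>v. snd v = 0) vs) \<le> M
        \<and> length (filter (\<lambda>v. fst v = 0) vs) \<le> M
        \<and> p \<in> region \<epsilon>0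
        \<longrightarrow> \<bar>dderiv vs (phiP \<phi>) p\<bar> \<le> 1)"

definition mixed_hessian :: "(real^2 \<Rightarrow> real \<Rightarrow> real^2 \<Rightarrow> real) \<Rightarrow> ((real^2) \<times> real) \<times> (real^2) \<Rightarrow> real^2^2" where
  "mixed_hessian \<phi> p =
     (\<chi> i j. dderiv [(0, axis j 1), ((axis i 1, 0), 0)] (phiP \<phi>) p)"

definition rank_condition :: "real \<Rightarrow> (real^2 \<Rightarrow> real \<Rightarrow> real^2 \<Rightarrow> real) \<Rightarrow> bool" where
  "rank_condition \<epsilon>0 \<phi> \<longleftrightarrow> (\<forall>p \<in> region \<epsilon>0. rank (mixed_hessian \<phi> p) = 2)"

definition u :: "(real^2 \<Rightarrow> real \<Rightarrow> real^2 \<Rightarrow> real) \<Rightarrow> real^2 \<Rightarrow> real^2 \<Rightarrow> real \<Rightarrow> real^2" where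
  "u \<phi> \<theta> x t = (\<chi> j. frechet_derivative (\<phi> x t) (at \<theta>) (axis j 1))"

definition u_lam :: "(real^2 \<Rightarrow> real \<Rightarrow> real^2 \<Rightarrow> real) \<Rightarrow> real \<Rightarrow> real^2 \<Rightarrow> real^2 \<Rightarrow> real \<Rightarrow> real^2" where
  "u_lam \<phi> lam \<theta> x t = lam *\<^sub>R u \<phi> \<theta> ((1 / lam) *\<^sub>R x) (t / lam)"

definition xt_of :: "real^3 \<Rightarrow> (real^2) \<times> real" where
  "xt_of y = (vector [y $ 1, y $ 2], y $ 3)"

definition Fmap :: "(real^2 \<Rightarrow> real \<Rightarrow> real^2 \<Rightarrow> real) \<Rightarrow> real \<Rightarrow> real^2 \<Rightarrow> real^3 \<Rightarrow> real^3" where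
  "Fmap \<phi> lam \<theta> y =
     (let U = u_lam \<phi> lam \<theta> (fst (xt_of y)) (snd (xt_of y)) in vector [U $ 1, U $ 2, y $ 3])"

definition Jac :: "(real^2 \<Rightarrow> real \<Rightarrow> real^2 \<Rightarrow> real) \<Rightarrow> real \<Rightarrow> real^2 \<Rightarrow> real^3 \<Rightarrow> real^3^3" where
  "Jac \<phi> lam \<theta> y = matrix (frechet_derivative (Fmap \<phi> lam \<theta>) (at y))"

text \<open>Closed arc of S^1 with center c (a unit vector) and aperture (angular length) a.\<close>
definition arc :: "real^2 \<Rightarrow> real \<Rightarrow> (real^2) set" where
  "arc c a = {v. norm v = 1 \<and> arccos (v \<bullet> c) \<le> a / 2}"

definition perp :: "real^2 \<Rightarrow> real^2" where
  "perp v = vector [- (v $ 2), v $ 1]"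

definition Theta :: "real \<Rightarrow> real \<Rightarrow> real^2 \<Rightarrow> (real^3) set" where
  "Theta R \<sigma> \<tau> = {vector [a * \<tau> $ 1 + b * perp \<tau> $ 1, a * \<tau> $ 2 + b * perp \<tau> $ 2, c] | a b c.
       \<bar>a\<bar> \<le> \<sigma>^2 / 2 \<and> \<bar>b\<bar> \<le> \<sigma> * R powr (-1/2) / 2 \<and> \<bar>c\<bar> \<le> R powr (-1) / 2}"

definition dyadic :: "real \<Rightarrow> bool" where
  "dyadic \<sigma> \<longleftrightarrow> (\<exists>k::int. \<sigma> = 2 powr (real_of_int k))"

end

theory Submission
  imports Defs
begin


lemma line_deriv:
  fixes f :: "'a::real_normed_vector \<Rightarrow> real"
  assumes "(f has_derivative f') (at (p + s *\<^sub>R v))"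
  shows "((\<lambda>s. f (p + s *\<^sub>R v)) has_real_derivative f' v) (at s)"
proof -
  have l: "linear f'" using assms has_derivative_linear by blast
  have "((\<lambda>s. p + s *\<^sub>R v) has_derivative (\<lambda>s. s *\<^sub>R v)) (at s)"
    by (auto intro!: derivative_eq_intros)
  from has_derivative_compose[OF this assms]
  have "((\<lambda>s. f (p + s *\<^sub>R v)) has_derivative (\<lambda>x. f' (x *\<^sub>R v))) (at s)" .
  moreover have "(\<lambda>x. f' (x *\<^sub>R v)) = (*) (f' v)"
    using linear_cmul[OF l] by (auto simp: mult.commute)
  ultimately show ?thesis by (simp add: has_field_derivative_def)
qed

lemma delta_lemma:
  fixes f :: "'a::real_normed_vector \<Rightarrow> real"
  assumes B: "ball q r \<subseteq> S" and h: "0 < h" "h * (norm v + norm w) < r"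
  and d1: "\<And>p. p \<in> S \<Longrightarrow> (f has_derivative fD p) (at p)"
  and d2: "\<And>p. p \<in> S \<Longrightarrow> ((\<lambda>p. fD p v) has_derivative fDD p) (at p)"
  shows "\<exists>q1. dist q1 q \<le> h * (norm v + norm w) \<and>
     f (q + h *\<^sub>R v + h *\<^sub>R w) - f (q + h *\<^sub>R v) - f (q + h *\<^sub>R w) + f q = h^2 * fDD q1 w"
proof -
  have inS: "q + a *\<^sub>R v + b *\<^sub>R w \<in> S" if "0 \<le> a" "a \<le> h" "0 \<le> b" "b \<le> h" for a b
  proof -
    have "norm (a *\<^sub>R v + b *\<^sub>R w) \<le> a * norm v + b * norm w"
      using norm_triangle_ineq[of "a *\<^sub>R v" "b *\<^sub>R w"] that by simp
    also have "\<dots> \<le> h * norm v + h * norm w"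
      using that by (intro add_mono mult_right_mono) auto
    finally have "norm (a *\<^sub>R v + b *\<^sub>R w) < r" using h by (simp add: distrib_left)
    then have "q + a *\<^sub>R v + b *\<^sub>R w \<in> ball q r"
      using norm_minus_cancel[of "a *\<^sub>R v + b *\<^sub>R w"] by (simp add: dist_norm add.assoc)
    then show ?thesis using B by blast
  qed
  define g where "g s = f (q + s *\<^sub>R v + h *\<^sub>R w) - f (q + s *\<^sub>R v)" for s
  have gd: "(g has_real_derivative (fD (q + s *\<^sub>R v + h *\<^sub>R w) v - fD (q + s *\<^sub>R v) v)) (at s)"
    if "0 \<le> s" "s \<le> h" for s
  proof -
    have a: "((\<lambda>s. f ((q + h *\<^sub>R w) + s *\<^sub>R v)) has_real_derivative fD (q + s *\<^sub>R v + h *\<^sub>R w) v) (at s)"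
    proof -
      have e: "(q + h *\<^sub>R w) + s *\<^sub>R v = q + s *\<^sub>R v + h *\<^sub>R w" by (simp add: algebra_simps)
      have "(f has_derivative fD (q + s *\<^sub>R v + h *\<^sub>R w)) (at ((q + h *\<^sub>R w) + s *\<^sub>R v))"
        unfolding e using d1[OF inS[OF that, of h]] h by simp
      from line_deriv[OF this] show ?thesis unfolding e .
    qed
    have b: "((\<lambda>s. f (q + s *\<^sub>R v)) has_real_derivative fD (q + s *\<^sub>R v) v) (at s)"
      using line_deriv[OF d1, of q s v] inS[OF that, of 0] h by simp
    show ?thesis unfolding g_def using DERIV_diff[OF a b] by (simp add: ac_simps)
  qed
  obtain \<xi> where \<xi>: "0 < \<xi>" "\<xi> < h" "g h - g 0 = (h - 0) * (fD (q + \<xi> *\<^sub>R v + h *\<^sub>R w) v - fD (q + \<xi> *\<^sub>R v) v)"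
    using MVT2[OF h(1) gd] by auto
  define k where "k t = fD (q + \<xi> *\<^sub>R v + t *\<^sub>R w) v" for t
  have kd: "(k has_real_derivative fDD (q + \<xi> *\<^sub>R v + t *\<^sub>R w) w) (at t)" if "0 \<le> t" "t \<le> h" for t
  proof -
    have "((\<lambda>p. fD p v) has_derivative fDD (q + \<xi> *\<^sub>R v + t *\<^sub>R w)) (at ((q + \<xi> *\<^sub>R v) + t *\<^sub>R w))"
      using d2[OF inS[of \<xi> t]] \<xi> that by simp
    from line_deriv[OF this] show ?thesis unfolding k_def .
  qed
  obtain \<zeta> where \<zeta>: "0 < \<zeta>" "\<zeta> < h" "k h - k 0 = (h - 0) * fDD (q + \<xi> *\<^sub>R v + \<zeta> *\<^sub>R w) w"
    using MVT2[OF h(1) kd] by auto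
  have "dist (q + \<xi> *\<^sub>R v + \<zeta> *\<^sub>R w) q \<le> h * (norm v + norm w)"
  proof -
    have "dist (q + \<xi> *\<^sub>R v + \<zeta> *\<^sub>R w) q = norm (\<xi> *\<^sub>R v + \<zeta> *\<^sub>R w)" by (simp add: dist_norm)
    also have "\<dots> \<le> \<xi> * norm v + \<zeta> * norm w"
      using norm_triangle_ineq[of "\<xi> *\<^sub>R v" "\<zeta> *\<^sub>R w"] \<xi> \<zeta> by simp
    also have "\<dots> \<le> h * norm v + h * norm w"
      using \<xi> \<zeta> by (intro add_mono mult_right_mono) auto
    finally show ?thesis by (simp add: distrib_left)
  qed
  moreover have "f (q + h *\<^sub>R v + h *\<^sub>R w) - f (q + h *\<^sub>R v) - f (q + h *\<^sub>R w) + f q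
      = h^2 * fDD (q + \<xi> *\<^sub>R v + \<zeta> *\<^sub>R w) w"
  proof -
    have "f (q + h *\<^sub>R v + h *\<^sub>R w) - f (q + h *\<^sub>R v) - f (q + h *\<^sub>R w) + f q = g h - g 0"
      by (simp add: g_def)
    also have "\<dots> = h * (k h - k 0)" using \<xi> by (simp add: k_def)
    also have "\<dots> = h^2 * fDD (q + \<xi> *\<^sub>R v + \<zeta> *\<^sub>R w) w" using \<zeta> by (simp add: power2_eq_square)
    finally show ?thesis .
  qed
  ultimately show ?thesis by blast
qed

lemma schwarz:
  fixes f :: "'a::real_normed_vector \<Rightarrow> real"
  assumes S: "open S" "q \<in> S"
  and d1: "\<And>p. p \<in> S \<Longrightarrow> (f has_derivative fD p) (at p)"
  and dv: "\<And>p. p \<in> S \<Longrightarrow> ((\<lambda>p. fD p v) has_derivative fv p) (at p)"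
  and dw: "\<And>p. p \<in> S \<Longrightarrow> ((\<lambda>p. fD p w) has_derivative fw p) (at p)"
  and cv: "continuous (at q) (\<lambda>p. fv p w)" and cw: "continuous (at q) (\<lambda>p. fw p v)"
  shows "fv q w = fw q v"
proof (rule ccontr)
  assume ne: "fv q w \<noteq> fw q v"
  define e where "e = \<bar>fv q w - fw q v\<bar> / 2"
  have e: "e > 0" using ne by (simp add: e_def)
  obtain d1 where d1p: "d1 > 0" and d1h: "\<And>p. dist p q < d1 \<Longrightarrow> dist (fv p w) (fv q w) < e"
    using cv e unfolding continuous_at_eps_delta by blast
  obtain d2 where d2p: "d2 > 0" and d2h: "\<And>p. dist p q < d2 \<Longrightarrow> dist (fw p v) (fw q v) < e"
    using cw e unfolding continuous_at_eps_delta by blast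
  obtain r where r: "r > 0" "ball q r \<subseteq> S" using S open_contains_ball by blast
  define m where "m = min r (min d1 d2)"
  define N where "N = norm v + norm w + 1"
  define h where "h = m / (2 * N)"
  have m: "m > 0" "m \<le> r" "m \<le> d1" "m \<le> d2" using r d1p d2p by (auto simp: m_def)
  have N: "N \<ge> 1" by (simp add: N_def)
  have hp: "h > 0" using m N by (simp add: h_def)
  have "h * (norm v + norm w) \<le> h * N" using hp by (simp add: N_def)
  also have "h * N = m / 2" using N by (simp add: h_def)
  finally have hs: "h * (norm v + norm w) < m" using m by simp
  have hr1: "h * (norm v + norm w) < r" and hr2: "h * (norm w + norm v) < r"
    using hs m by (auto simp: add.commute)
  obtain q1 where q1: "dist q1 q \<le> h * (norm v + norm w)"
    "f (q + h *\<^sub>R v + h *\<^sub>R w) - f (q + h *\<^sub>R v) - f (q + h *\<^sub>R w) + f q = h^2 * fv q1 w"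
    using delta_lemma[OF r(2) hp hr1 assms(3) dv] by blast
  obtain q2 where q2: "dist q2 q \<le> h * (norm w + norm v)"
    "f (q + h *\<^sub>R w + h *\<^sub>R v) - f (q + h *\<^sub>R w) - f (q + h *\<^sub>R v) + f q = h^2 * fw q2 v"
    using delta_lemma[OF r(2) hp hr2 assms(3) dw] by blast
  have "q + h *\<^sub>R w + h *\<^sub>R v = q + h *\<^sub>R v + h *\<^sub>R w" by (simp add: algebra_simps)
  with q1(2) q2(2) have "h^2 * fv q1 w = h^2 * fw q2 v" by (simp add: algebra_simps)
  then have eq: "fv q1 w = fw q2 v" using hp by simp
  have "dist (fv q1 w) (fv q w) < e" using d1h q1(1) hs m by simp
  moreover have "dist (fw q2 v) (fw q v) < e" using d2h q2(1) hs m by (simp add: add.commute)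
  ultimately have "\<bar>fv q w - fw q v\<bar> < 2 * e" using eq by (simp add: dist_real_def)
  then show False by (simp add: e_def)
qed



type_synonym pt = "((real^2) \<times> real) \<times> (real^2)"

definition S0 :: "pt set" where "S0 = {p. snd p \<noteq> 0}"

lemma open_S0: "open S0"
  unfolding S0_def by (rule open_Collect_neq) (auto intro: continuous_intros)

lemma dd_deriv:
  assumes "smooth_phase \<phi>" "snd p \<noteq> 0"
  shows "(dderiv vs (phiP \<phi>) has_derivative (\<lambda>v. dderiv (v#vs) (phiP \<phi>) p)) (at p)"
proof -
  have "dderiv vs (phiP \<phi>) differentiable (at p)" using assms unfolding smooth_phase_def by blast
  then show ?thesis unfolding frechet_derivative_works by simp
qed

lemma dd_linear:
  assumes "smooth_phase \<phi>" "snd p \<noteq> 0"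
  shows "linear (\<lambda>v. dderiv (v#vs) (phiP \<phi>) p)"
  using dd_deriv[OF assms] has_derivative_linear by blast

lemma dd_lin2:
  assumes "smooth_phase \<phi>" "snd p \<noteq> 0"
  shows "dderiv ((a *\<^sub>R x + b *\<^sub>R y) # vs) (phiP \<phi>) p
       = a * dderiv (x # vs) (phiP \<phi>) p + b * dderiv (y # vs) (phiP \<phi>) p"
  using dd_linear[OF assms, of vs] by (simp add: linear_add linear_cmul)

lemma dd_cont:
  assumes "smooth_phase \<phi>" "snd p \<noteq> 0"
  shows "continuous (at p) (dderiv vs (phiP \<phi>))"
  using assms unfolding smooth_phase_def by (blast intro: differentiable_imp_continuous_within)

lemma dd_swap:
  assumes sm: "smooth_phase \<phi>" and q: "snd q \<noteq> 0"
  shows "dderiv (v # w # vs) (phiP \<phi>) q = dderiv (w # v # vs) (phiP \<phi>) q"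
proof -
  have "(\<lambda>z. dderiv (z # v # vs) (phiP \<phi>) q) w = (\<lambda>z. dderiv (z # w # vs) (phiP \<phi>) q) v"
  proof (rule schwarz[where S=S0 and f="dderiv vs (phiP \<phi>)" and fD="\<lambda>p z. dderiv (z # vs) (phiP \<phi>) p"
      and fv="\<lambda>p z. dderiv (z # v # vs) (phiP \<phi>) p" and fw="\<lambda>p z. dderiv (z # w # vs) (phiP \<phi>) p"
      and v=v and w=w])
    show "open S0" by (rule open_S0)
    show "q \<in> S0" using q by (simp add: S0_def)
    show "(dderiv vs (phiP \<phi>) has_derivative (\<lambda>z. dderiv (z # vs) (phiP \<phi>) p)) (at p)" if "p \<in> S0" for p
      using dd_deriv[OF sm] that by (simp add: S0_def)
    show "((\<lambda>p. dderiv (v # vs) (phiP \<phi>) p) has_derivative (\<lambda>z. dderiv (z # v # vs) (phiP \<phi>) p)) (at p)"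
      if "p \<in> S0" for p
      using dd_deriv[OF sm, of p "v # vs"] that by (simp add: S0_def)
    show "((\<lambda>p. dderiv (w # vs) (phiP \<phi>) p) has_derivative (\<lambda>z. dderiv (z # w # vs) (phiP \<phi>) p)) (at p)"
      if "p \<in> S0" for p
      using dd_deriv[OF sm, of p "w # vs"] that by (simp add: S0_def)
    show "continuous (at q) (\<lambda>p. dderiv (w # v # vs) (phiP \<phi>) p)"
      using dd_cont[OF sm q, of "w # v # vs"] by simp
    show "continuous (at q) (\<lambda>p. dderiv (v # w # vs) (phiP \<phi>) p)"
      using dd_cont[OF sm q, of "v # w # vs"] by simp
  qed
  then show ?thesis by simp
qed

lemma prod_rule:
  assumes sm: "smooth_phase \<phi>" and q: "snd q \<noteq> 0"
  and eq: "\<And>p. snd p \<noteq> 0 \<Longrightarrow> (snd p)$1 * dderiv vs1 (phiP \<phi>) p + (snd p)$2 * dderiv vs2 (phiP \<phi>) p = g p"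
  and gd: "(g has_derivative g') (at q)"
  shows "(snd d)$1 * dderiv vs1 (phiP \<phi>) q + (snd q)$1 * dderiv (d#vs1) (phiP \<phi>) q
       + ((snd d)$2 * dderiv vs2 (phiP \<phi>) q + (snd q)$2 * dderiv (d#vs2) (phiP \<phi>) q) = g' d"
proof -
  have bl: "bounded_linear (\<lambda>p::pt. snd p $ i)" for i
    by (rule bounded_linear_compose[OF bounded_linear_vec_nth bounded_linear_snd])
  have sd: "((\<lambda>p::pt. snd p $ i) has_derivative (\<lambda>p. snd p $ i)) (at q)" for i
    using bounded_linear_imp_has_derivative[OF bl] .
  have "((\<lambda>p. (snd p)$1 * dderiv vs1 (phiP \<phi>) p + (snd p)$2 * dderiv vs2 (phiP \<phi>) p) has_derivative
     (\<lambda>d. (snd q)$1 * dderiv (d#vs1) (phiP \<phi>) q + (snd d)$1 * dderiv vs1 (phiP \<phi>) q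
       + ((snd q)$2 * dderiv (d#vs2) (phiP \<phi>) q + (snd d)$2 * dderiv vs2 (phiP \<phi>) q))) (at q)"
    by (rule has_derivative_add[OF has_derivative_mult[OF sd dd_deriv[OF sm q]] has_derivative_mult[OF sd dd_deriv[OF sm q]]])
  then have "(g has_derivative
     (\<lambda>d. (snd q)$1 * dderiv (d#vs1) (phiP \<phi>) q + (snd d)$1 * dderiv vs1 (phiP \<phi>) q
       + ((snd q)$2 * dderiv (d#vs2) (phiP \<phi>) q + (snd d)$2 * dderiv vs2 (phiP \<phi>) q))) (at q)"
  proof (rule has_derivative_transform_within_open[OF _ open_S0])
    show "q \<in> S0" using q by (simp add: S0_def)
  qed (use eq in \<open>auto simp: S0_def\<close>)
  from fun_cong[OF has_derivative_unique[OF this gd], of d] show ?thesis by (simp add: algebra_simps)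
qed



lemma vec2_decomp: "((0::(real^2)\<times>real), \<eta>::real^2) = \<eta>$1 *\<^sub>R (0, axis 1 1) + \<eta>$2 *\<^sub>R (0, axis 2 1)"
  by (simp add: prod_eq_iff vec_eq_iff forall_2 axis_def)

lemma dd_decomp:
  assumes sm: "smooth_phase \<phi>" and p: "snd p \<noteq> 0"
  shows "dderiv ((0, \<eta>) # vs) (phiP \<phi>) p
     = \<eta>$1 * dderiv ((0, axis 1 1) # vs) (phiP \<phi>) p + \<eta>$2 * dderiv ((0, axis 2 1) # vs) (phiP \<phi>) p"
  using dd_lin2[OF sm p, of "\<eta>$1" "(0, axis 1 1)" "\<eta>$2" "(0, axis 2 1)" vs] vec2_decomp[of \<eta>] by simp

lemma euler0:
  assumes sm: "smooth_phase \<phi>" and hom: "homog1 \<phi>" and p: "snd p \<noteq> 0"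
  shows "(snd p)$1 * dderiv [(0, axis 1 1)] (phiP \<phi>) p + (snd p)$2 * dderiv [(0, axis 2 1)] (phiP \<phi>) p
     = dderiv [] (phiP \<phi>) p"
proof -
  obtain x0 \<eta> where pe: "p = (x0, \<eta>)" by (cases p)
  have \<eta>: "\<eta> \<noteq> 0" using p pe by simp
  have h: "phiP \<phi> (x0, s *\<^sub>R \<eta>) = s * phiP \<phi> p" if "s > 0" for s
    using hom \<eta> that unfolding homog1_def phiP_def pe by simp
  have e: "(x0, 0) + s *\<^sub>R (0, \<eta>) = (x0, s *\<^sub>R \<eta>)" for s by simp
  have "(phiP \<phi> has_derivative (\<lambda>v. dderiv [v] (phiP \<phi>) p)) (at ((x0, 0) + 1 *\<^sub>R (0, \<eta>)))"
    using dd_deriv[OF sm p, of "[]"] pe by simp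
  from line_deriv[OF this]
  have d: "((\<lambda>s. phiP \<phi> (x0, s *\<^sub>R \<eta>)) has_real_derivative dderiv [(0, \<eta>)] (phiP \<phi>) p) (at 1)"
    unfolding e .
  have d': "((\<lambda>s. s * phiP \<phi> p) has_real_derivative dderiv [(0, \<eta>)] (phiP \<phi>) p) (at 1)"
    by (rule has_field_derivative_transform_within_open[OF d, of "{0<..}"]) (auto simp: h)
  have d2: "((\<lambda>s. s * phiP \<phi> p) has_real_derivative phiP \<phi> p) (at 1)"
    by (auto intro!: derivative_eq_intros)
  have "dderiv [(0, \<eta>)] (phiP \<phi>) p = phiP \<phi> p" using DERIV_unique[OF d' d2] .
  then show ?thesis using dd_decomp[OF sm p, of \<eta> "[]"] pe by simp
qed

lemma euler3:
  assumes sm: "smooth_phase \<phi>" and hom: "homog1 \<phi>" and p: "snd p \<noteq> 0"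
  shows "(snd p)$1 * dderiv [(0, v), (0, axis 1 1)] (phiP \<phi>) p + (snd p)$2 * dderiv [(0, v), (0, axis 2 1)] (phiP \<phi>) p = 0"
proof -
  have "(snd (0::(real^2)\<times>real, v))$1 * dderiv [(0, axis 1 1)] (phiP \<phi>) p + (snd p)$1 * dderiv [(0, v), (0, axis 1 1)] (phiP \<phi>) p
     + ((snd (0::(real^2)\<times>real, v))$2 * dderiv [(0, axis 2 1)] (phiP \<phi>) p + (snd p)$2 * dderiv [(0, v), (0, axis 2 1)] (phiP \<phi>) p)
     = dderiv [(0, v)] (phiP \<phi>) p"
    using prod_rule[OF sm p, of "[(0, axis 1 1)]" "[(0, axis 2 1)]" "dderiv [] (phiP \<phi>)"
        "\<lambda>v. dderiv [v] (phiP \<phi>) p" "(0, v)"] euler0[OF sm hom] dd_deriv[OF sm p, of "[]"]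
    by simp
  then show ?thesis using dd_decomp[OF sm p, of v "[]"] by simp
qed

lemma keyK:
  assumes sm: "smooth_phase \<phi>" and hom: "homog1 \<phi>" and p: "snd p \<noteq> 0" and b: "snd b = 0"
  shows "(snd p)$1 * dderiv [(0, v), b, (0, axis 1 1)] (phiP \<phi>) p + (snd p)$2 * dderiv [(0, v), b, (0, axis 2 1)] (phiP \<phi>) p = 0"
proof -
  have "(snd b)$1 * dderiv [(0, v), (0, axis 1 1)] (phiP \<phi>) p + (snd p)$1 * dderiv [b, (0, v), (0, axis 1 1)] (phiP \<phi>) p
     + ((snd b)$2 * dderiv [(0, v), (0, axis 2 1)] (phiP \<phi>) p + (snd p)$2 * dderiv [b, (0, v), (0, axis 2 1)] (phiP \<phi>) p)
     = (\<lambda>_. 0) b"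
    by (rule prod_rule[OF sm p, of "[(0, v), (0, axis 1 1)]" "[(0, v), (0, axis 2 1)]" "\<lambda>_. 0"])
       (use euler3[OF sm hom] in \<open>simp_all del: dderiv.simps\<close>)
  then show ?thesis using b dd_swap[OF sm p, of b "(0, v)" "[(0, axis 1 1)]"] dd_swap[OF sm p, of b "(0, v)" "[(0, axis 2 1)]"]
    by (simp del: dderiv.simps)
qed



lemma u_eq:
  assumes sm: "smooth_phase \<phi>" and th: "\<theta> \<noteq> 0"
  shows "u \<phi> \<theta> x t $ j = dderiv [(0, axis j 1)] (phiP \<phi>) ((x, t), \<theta>)"
proof -
  have i: "((\<lambda>\<eta>. ((x, t), \<eta>)) has_derivative (\<lambda>v. (0, v))) (at \<theta>)"
    by (auto intro!: derivative_eq_intros)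
  have "(phiP \<phi> has_derivative (\<lambda>v. dderiv [v] (phiP \<phi>) ((x, t), \<theta>))) (at ((x, t), \<theta>))"
    using dd_deriv[OF sm, of "((x, t), \<theta>)" "[]"] th by simp
  from has_derivative_compose[OF i this]
  have "(\<phi> x t has_derivative (\<lambda>v. dderiv [(0, v)] (phiP \<phi>) ((x, t), \<theta>))) (at \<theta>)"
    by (simp add: phiP_def del: dderiv.simps)
  from fun_cong[OF frechet_derivative_at[OF this], of "axis j 1"] show ?thesis
    unfolding u_def by (simp del: dderiv.simps)
qed

lemma xt_of_linear: "linear xt_of"
  by (rule linearI) (simp_all add: xt_of_def vec_eq_iff forall_2)

lemma xt_of_bl: "bounded_linear xt_of"
  using xt_of_linear linear_conv_bounded_linear by blast

lemma Fmap_eq: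
  assumes sm: "smooth_phase \<phi>" and th: "\<theta> \<noteq> 0" and lam: "lam > 0"
  shows "Fmap \<phi> lam \<theta> y $ 1 = lam * dderiv [(0, axis 1 1)] (phiP \<phi>) ((1 / lam) *\<^sub>R xt_of y, \<theta>)"
    "Fmap \<phi> lam \<theta> y $ 2 = lam * dderiv [(0, axis 2 1)] (phiP \<phi>) ((1 / lam) *\<^sub>R xt_of y, \<theta>)"
    "Fmap \<phi> lam \<theta> y $ 3 = y $ 3"
proof -
  have e: "((1 / lam) *\<^sub>R fst (xt_of y), snd (xt_of y) / lam) = (1 / lam) *\<^sub>R xt_of y"
    by (simp add: prod_eq_iff)
  show "Fmap \<phi> lam \<theta> y $ 1 = lam * dderiv [(0, axis 1 1)] (phiP \<phi>) ((1 / lam) *\<^sub>R xt_of y, \<theta>)"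
    "Fmap \<phi> lam \<theta> y $ 2 = lam * dderiv [(0, axis 2 1)] (phiP \<phi>) ((1 / lam) *\<^sub>R xt_of y, \<theta>)"
    "Fmap \<phi> lam \<theta> y $ 3 = y $ 3"
    unfolding Fmap_def u_lam_def Let_def
    using u_eq[OF sm th, of _ _ 1] u_eq[OF sm th, of _ _ 2] e
    by (simp_all del: dderiv.simps)
qed

lemma comp_deriv:
  assumes sm: "smooth_phase \<phi>" and th: "\<theta> \<noteq> 0" and lam: "lam > 0"
  shows "((\<lambda>y. lam * dderiv [(0, axis j 1)] (phiP \<phi>) ((1 / lam) *\<^sub>R xt_of y, \<theta>)) has_derivative
     (\<lambda>v. dderiv [(xt_of v, 0), (0, axis j 1)] (phiP \<phi>) ((1 / lam) *\<^sub>R xt_of y, \<theta>))) (at y)"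
proof -
  let ?q = "((1 / lam) *\<^sub>R xt_of y, \<theta>)"
  have L: "((\<lambda>y. ((1 / lam) *\<^sub>R xt_of y, \<theta>)) has_derivative (\<lambda>v. ((1 / lam) *\<^sub>R xt_of v, 0))) (at y)"
    by (auto intro!: derivative_eq_intros bounded_linear.has_derivative[OF xt_of_bl])
  have "(dderiv [(0, axis j 1)] (phiP \<phi>) has_derivative (\<lambda>v. dderiv [v, (0, axis j 1)] (phiP \<phi>) ?q)) (at ?q)"
    using dd_deriv[OF sm, of ?q "[(0, axis j 1)]"] th by simp
  from has_derivative_mult_right[OF has_derivative_compose[OF L this], of lam]
  have "((\<lambda>y. lam * dderiv [(0, axis j 1)] (phiP \<phi>) ((1 / lam) *\<^sub>R xt_of y, \<theta>)) has_derivative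
     (\<lambda>v. lam * dderiv [((1 / lam) *\<^sub>R xt_of v, 0), (0, axis j 1)] (phiP \<phi>) ?q)) (at y)" .
  moreover have "lam * dderiv [((1 / lam) *\<^sub>R xt_of v, 0), (0, axis j 1)] (phiP \<phi>) ?q
      = dderiv [(xt_of v, 0), (0, axis j 1)] (phiP \<phi>) ?q" for v
  proof -
    have e: "((1 / lam) *\<^sub>R xt_of v, 0::real^2) = (1 / lam) *\<^sub>R (xt_of v, 0)" by simp
    have "dderiv [(1 / lam) *\<^sub>R (xt_of v, 0::real^2), (0, axis j 1)] (phiP \<phi>) ?q
       = (1 / lam) * dderiv [(xt_of v, 0), (0, axis j 1)] (phiP \<phi>) ?q"
      using linear_cmul[OF dd_linear[OF sm, of ?q "[(0, axis j 1)]"], of "1 / lam" "(xt_of v, 0)"] th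
      by (simp del: dderiv.simps)
    then show ?thesis unfolding e using lam by (simp del: dderiv.simps)
  qed
  ultimately show ?thesis by (simp del: dderiv.simps)
qed



definition Fd :: "(real^2 \<Rightarrow> real \<Rightarrow> real^2 \<Rightarrow> real) \<Rightarrow> real \<Rightarrow> real^2 \<Rightarrow> real^3 \<Rightarrow> real^3 \<Rightarrow> real^3" where
  "Fd \<phi> lam \<theta> y v = vector [dderiv [(xt_of v, 0), (0, axis 1 1)] (phiP \<phi>) ((1 / lam) *\<^sub>R xt_of y, \<theta>),
      dderiv [(xt_of v, 0), (0, axis 2 1)] (phiP \<phi>) ((1 / lam) *\<^sub>R xt_of y, \<theta>), v $ 3]"

lemma Fmap_deriv:
  assumes sm: "smooth_phase \<phi>" and th: "\<theta> \<noteq> 0" and lam: "lam > 0"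
  shows "(Fmap \<phi> lam \<theta> has_derivative Fd \<phi> lam \<theta> y) (at y)"
proof -
  have c: "((\<lambda>x. Fmap \<phi> lam \<theta> x $ m) has_derivative (\<lambda>v. Fd \<phi> lam \<theta> y v $ m)) (at y)" for m
  proof -
    consider "m = 1" | "m = 2" | "m = 3" using exhaust_3 by blast
    then show ?thesis
    proof cases
      case 1
      have "(\<lambda>x. Fmap \<phi> lam \<theta> x $ m) = (\<lambda>y. lam * dderiv [(0, axis 1 1)] (phiP \<phi>) ((1 / lam) *\<^sub>R xt_of y, \<theta>))"
        unfolding 1 by (intro ext Fmap_eq(1)[OF sm th lam])
      moreover have "(\<lambda>v. Fd \<phi> lam \<theta> y v $ m) = (\<lambda>v. dderiv [(xt_of v, 0), (0, axis 1 1)] (phiP \<phi>) ((1 / lam) *\<^sub>R xt_of y, \<theta>))"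
        unfolding 1 Fd_def by (intro ext) (simp only: vector_3)
      ultimately show ?thesis using comp_deriv[OF sm th lam, of 1 y] by (simp only:)
    next
      case 2
      have "(\<lambda>x. Fmap \<phi> lam \<theta> x $ m) = (\<lambda>y. lam * dderiv [(0, axis 2 1)] (phiP \<phi>) ((1 / lam) *\<^sub>R xt_of y, \<theta>))"
        unfolding 2 by (intro ext Fmap_eq(2)[OF sm th lam])
      moreover have "(\<lambda>v. Fd \<phi> lam \<theta> y v $ m) = (\<lambda>v. dderiv [(xt_of v, 0), (0, axis 2 1)] (phiP \<phi>) ((1 / lam) *\<^sub>R xt_of y, \<theta>))"
        unfolding 2 Fd_def by (intro ext) (simp only: vector_3)
      ultimately show ?thesis using comp_deriv[OF sm th lam, of 2 y] by (simp only:)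
    next
      case 3
      have "(\<lambda>x. Fmap \<phi> lam \<theta> x $ m) = (\<lambda>y. y $ 3)"
        unfolding 3 by (intro ext Fmap_eq(3)[OF sm th lam])
      moreover have "(\<lambda>v. Fd \<phi> lam \<theta> y v $ m) = (\<lambda>v. v $ 3)"
        unfolding 3 Fd_def by (intro ext) (simp only: vector_3)
      ultimately show ?thesis using bounded_linear_imp_has_derivative[OF bounded_linear_vec_nth[of 3]] by (simp only:)
    qed
  qed
  show ?thesis
  proof (rule has_derivative_componentwise_within[THEN iffD2], rule ballI)
    fix i :: "real^3" assume "i \<in> Basis"
    then obtain m where i: "i = axis m 1" by (auto simp: Basis_vec_def)
    show "((\<lambda>x. Fmap \<phi> lam \<theta> x \<bullet> i) has_derivative (\<lambda>x. Fd \<phi> lam \<theta> y x \<bullet> i)) (at y)"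
      using c[of m] by (simp add: i inner_axis)
  qed
qed

lemma Jac_entry:
  assumes sm: "smooth_phase \<phi>" and th: "\<theta> \<noteq> 0" and lam: "lam > 0"
  shows "Jac \<phi> lam \<theta> y $ i $ k = Fd \<phi> lam \<theta> y (axis k 1) $ i"
  using frechet_derivative_at[OF Fmap_deriv[OF sm th lam, of y]]
  by (simp add: Jac_def matrix_def)

lemma row_entry:
  assumes sm: "smooth_phase \<phi>" and th: "\<theta> \<noteq> 0" and lam: "lam > 0"
  shows "(w v* Jac \<phi> lam \<theta> y) $ k =
    w$1 * dderiv [(xt_of (axis k 1), 0), (0, axis 1 1)] (phiP \<phi>) ((1 / lam) *\<^sub>R xt_of y, \<theta>)
  + w$2 * dderiv [(xt_of (axis k 1), 0), (0, axis 2 1)] (phiP \<phi>) ((1 / lam) *\<^sub>R xt_of y, \<theta>)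
  + w$3 * (axis k 1 :: real^3) $ 3"
  unfolding vector_matrix_mult_def using Jac_entry[OF sm th lam]
  by (simp add: sum_3 Fd_def mult.commute del: dderiv.simps)

lemma pair1_basis: "(a::'a::euclidean_space) \<in> Basis \<Longrightarrow> (a, 0::'b::euclidean_space) \<in> Basis"
  unfolding Basis_prod_def by (rule UnI1, rule imageI)

lemma pair2_basis: "(b::'b::euclidean_space) \<in> Basis \<Longrightarrow> (0::'a::euclidean_space, b) \<in> Basis"
  unfolding Basis_prod_def by (rule UnI2, rule imageI)

lemma xt_basis: "(xt_of (axis k 1), 0::real^2) \<in> (Basis :: pt set)"
proof -
  consider "k = 1" | "k = 2" | "k = 3" using exhaust_3 by blast
  then have "xt_of (axis k 1) \<in> (Basis :: ((real^2) \<times> real) set)"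
  proof cases
    case 1
    have "xt_of (axis k 1) = (axis 1 1, 0)" using 1 by (simp add: xt_of_def vec_eq_iff forall_2 axis_def)
    then show ?thesis by (simp add: pair1_basis)
  next
    case 2
    have "xt_of (axis k 1) = (axis 2 1, 0)" using 2 by (simp add: xt_of_def vec_eq_iff forall_2 axis_def)
    then show ?thesis by (simp add: pair1_basis)
  next
    case 3
    have "xt_of (axis k 1) = (0, 1)" using 3 by (simp add: xt_of_def vec_eq_iff forall_2 axis_def)
    then show ?thesis by (simp add: pair2_basis)
  qed
  then show ?thesis by (rule pair1_basis)
qed

lemma eta_basis: "((0::(real^2)\<times>real), axis j (1::real)) \<in> (Basis :: pt set)"
  by (rule pair2_basis) simp



lemma bnd3:
  assumes db: "deriv_bounds M \<epsilon>0 \<phi>" and M: "M \<ge> 3" and b: "b \<in> Basis"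
  and z: "z \<in> ball 0 \<epsilon>0" and \<eta>: "\<eta> \<in> ball e2 \<epsilon>0"
  shows "\<bar>dderiv [(0, axis i 1), b, (0, axis j 1)] (phiP \<phi>) (z, \<eta>)\<bar> \<le> 1"
proof -
  let ?vs = "[(0, axis i 1), b, (0, axis j 1)] :: pt list"
  have "?vs \<in> lists Basis" using b eta_basis[of i] eta_basis[of j] by simp
  moreover have "length (filter (\<lambda>v. snd v = 0) ?vs) \<le> M" "length (filter (\<lambda>v. fst v = 0) ?vs) \<le> M"
    using M by (auto intro!: order_trans[OF length_filter_le])
  moreover have "(z, \<eta>) \<in> region \<epsilon>0" using z \<eta> by (simp add: region_def)
  ultimately show ?thesis using db unfolding deriv_bounds_def by blast
qed

lemma abs_mul_le:
  fixes x y a :: real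
  assumes "\<bar>x\<bar> \<le> a" "\<bar>y\<bar> \<le> 1"
  shows "\<bar>x * y\<bar> \<le> a"
proof -
  have "\<bar>x\<bar> * \<bar>y\<bar> \<le> \<bar>x\<bar> * 1" using assms(2) by (intro mult_left_mono) auto
  then show ?thesis using assms(1) by (simp add: abs_mult)
qed

lemma bnd_dir:
  assumes sm: "smooth_phase \<phi>" and db: "deriv_bounds M \<epsilon>0 \<phi>" and M: "M \<ge> 3" and b: "b \<in> Basis"
  and z: "z \<in> ball 0 \<epsilon>0" and \<eta>: "\<eta> \<in> ball e2 \<epsilon>0" and \<eta>0: "\<eta> \<noteq> 0"
  shows "\<bar>dderiv [(0, d), b, (0, axis j 1)] (phiP \<phi>) (z, \<eta>)\<bar> \<le> 2 * norm d"
proof -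
  have e: "dderiv [(0, d), b, (0, axis j 1)] (phiP \<phi>) (z, \<eta>) =
     d$1 * dderiv [(0, axis 1 1), b, (0, axis j 1)] (phiP \<phi>) (z, \<eta>) + d$2 * dderiv [(0, axis 2 1), b, (0, axis j 1)] (phiP \<phi>) (z, \<eta>)"
    using dd_decomp[OF sm, of "(z, \<eta>)" d "[b, (0, axis j 1)]"] \<eta>0 by simp
  have b1: "\<bar>d$1 * dderiv [(0, axis 1 1), b, (0, axis j 1)] (phiP \<phi>) (z, \<eta>)\<bar> \<le> norm d"
    by (rule abs_mul_le[OF component_le_norm_cart bnd3[OF db M b z \<eta>]])
  have b2: "\<bar>d$2 * dderiv [(0, axis 2 1), b, (0, axis j 1)] (phiP \<phi>) (z, \<eta>)\<bar> \<le> norm d"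
    by (rule abs_mul_le[OF component_le_norm_cart bnd3[OF db M b z \<eta>]])
  show ?thesis unfolding e using b1 b2 by linarith
qed



lemma chord_deriv:
  assumes sm: "smooth_phase \<phi>" and ne: "\<theta>2 + s *\<^sub>R d \<noteq> 0"
  shows "((\<lambda>s. dderiv vs (phiP \<phi>) (z, \<theta>2 + s *\<^sub>R d)) has_real_derivative
          dderiv ((0, d) # vs) (phiP \<phi>) (z, \<theta>2 + s *\<^sub>R d)) (at s)"
proof -
  have e: "(z, \<theta>2) + s *\<^sub>R (0, d) = (z, \<theta>2 + s *\<^sub>R d)" for s by simp
  have "(dderiv vs (phiP \<phi>) has_derivative (\<lambda>v. dderiv (v # vs) (phiP \<phi>) (z, \<theta>2 + s *\<^sub>R d))) (at ((z, \<theta>2) + s *\<^sub>R (0, d)))"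
    unfolding e using dd_deriv[OF sm, of "(z, \<theta>2 + s *\<^sub>R d)" vs] ne by simp
  from line_deriv[OF this] show ?thesis unfolding e .
qed

lemma core1:
  assumes sm: "smooth_phase \<phi>" and db: "deriv_bounds M \<epsilon>0 \<phi>" and M: "M \<ge> 3" and b: "b \<in> Basis"
  and z: "z \<in> ball 0 \<epsilon>0"
  and ch: "\<And>s. 0 \<le> s \<Longrightarrow> s \<le> 1 \<Longrightarrow> \<theta>2 + s *\<^sub>R (\<theta>1 - \<theta>2) \<in> ball e2 \<epsilon>0 \<and> \<theta>2 + s *\<^sub>R (\<theta>1 - \<theta>2) \<noteq> 0"
  shows "\<bar>dderiv [b, (0, axis j 1)] (phiP \<phi>) (z, \<theta>1) - dderiv [b, (0, axis j 1)] (phiP \<phi>) (z, \<theta>2)\<bar>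
     \<le> 2 * norm (\<theta>1 - \<theta>2)"
proof -
  let ?d = "\<theta>1 - \<theta>2"
  let ?g = "\<lambda>s. dderiv [b, (0, axis j 1)] (phiP \<phi>) (z, \<theta>2 + s *\<^sub>R ?d)"
  have "\<And>s. 0 \<le> s \<Longrightarrow> s \<le> 1 \<Longrightarrow> (?g has_real_derivative dderiv [(0, ?d), b, (0, axis j 1)] (phiP \<phi>) (z, \<theta>2 + s *\<^sub>R ?d)) (at s)"
    using chord_deriv[OF sm] ch by blast
  from MVT2[OF zero_less_one this] obtain \<xi> where \<xi>: "0 < \<xi>" "\<xi> < 1"
    "?g 1 - ?g 0 = (1 - 0) * dderiv [(0, ?d), b, (0, axis j 1)] (phiP \<phi>) (z, \<theta>2 + \<xi> *\<^sub>R ?d)" by blast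
  have "\<bar>dderiv [(0, ?d), b, (0, axis j 1)] (phiP \<phi>) (z, \<theta>2 + \<xi> *\<^sub>R ?d)\<bar> \<le> 2 * norm ?d"
    using bnd_dir[OF sm db M b z] ch[of \<xi>] \<xi> by simp
  then show ?thesis using \<xi>(3) by simp
qed

lemma core2:
  assumes sm: "smooth_phase \<phi>" and hom: "homog1 \<phi>" and db: "deriv_bounds M \<epsilon>0 \<phi>" and M: "M \<ge> 3"
  and b: "b \<in> Basis" and b0: "snd b = 0"
  and z: "z \<in> ball 0 \<epsilon>0"
  and ch: "\<And>s. 0 \<le> s \<Longrightarrow> s \<le> 1 \<Longrightarrow> \<theta>2 + s *\<^sub>R (\<theta>1 - \<theta>2) \<in> ball e2 \<epsilon>0 \<and> \<theta>2 + s *\<^sub>R (\<theta>1 - \<theta>2) \<noteq> 0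
      \<and> norm (\<tau> - (\<theta>2 + s *\<^sub>R (\<theta>1 - \<theta>2))) \<le> \<rho>"
  shows "\<bar>\<tau>$1 * (dderiv [b, (0, axis 1 1)] (phiP \<phi>) (z, \<theta>1) - dderiv [b, (0, axis 1 1)] (phiP \<phi>) (z, \<theta>2))
         + \<tau>$2 * (dderiv [b, (0, axis 2 1)] (phiP \<phi>) (z, \<theta>1) - dderiv [b, (0, axis 2 1)] (phiP \<phi>) (z, \<theta>2))\<bar>
     \<le> 4 * \<rho> * norm (\<theta>1 - \<theta>2)"
proof -
  let ?d = "\<theta>1 - \<theta>2"
  let ?\<eta> = "\<lambda>s. \<theta>2 + s *\<^sub>R ?d"
  let ?X = "\<lambda>j s. dderiv [(0, ?d), b, (0, axis j 1)] (phiP \<phi>) (z, ?\<eta> s)"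
  let ?g = "\<lambda>s. \<tau>$1 * dderiv [b, (0, axis 1 1)] (phiP \<phi>) (z, ?\<eta> s) + \<tau>$2 * dderiv [b, (0, axis 2 1)] (phiP \<phi>) (z, ?\<eta> s)"
  have "\<And>s. 0 \<le> s \<Longrightarrow> s \<le> 1 \<Longrightarrow> (?g has_real_derivative (\<tau>$1 * ?X 1 s + \<tau>$2 * ?X 2 s)) (at s)"
    by (intro DERIV_add DERIV_cmult chord_deriv[OF sm]) (use ch in blast)+
  from MVT2[OF zero_less_one this] obtain \<xi> where \<xi>: "0 < \<xi>" "\<xi> < 1"
    "?g 1 - ?g 0 = (1 - 0) * (\<tau>$1 * ?X 1 \<xi> + \<tau>$2 * ?X 2 \<xi>)" by blast
  have chx: "?\<eta> \<xi> \<in> ball e2 \<epsilon>0" "?\<eta> \<xi> \<noteq> 0" "norm (\<tau> - ?\<eta> \<xi>) \<le> \<rho>" using ch[of \<xi>] \<xi> by auto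
  have K: "(?\<eta> \<xi>)$1 * ?X 1 \<xi> + (?\<eta> \<xi>)$2 * ?X 2 \<xi> = 0"
    using keyK[OF sm hom _ b0, of "(z, ?\<eta> \<xi>)" ?d] chx by simp
  have "\<tau>$1 * ?X 1 \<xi> + \<tau>$2 * ?X 2 \<xi> = (\<tau> - ?\<eta> \<xi>)$1 * ?X 1 \<xi> + (\<tau> - ?\<eta> \<xi>)$2 * ?X 2 \<xi>"
    using K by (simp add: algebra_simps)
  also have "\<bar>\<dots>\<bar> \<le> \<rho> * (2 * norm ?d) + \<rho> * (2 * norm ?d)"
  proof -
    have x1: "\<bar>?X 1 \<xi>\<bar> \<le> 2 * norm ?d" using bnd_dir[OF sm db M b z chx(1) chx(2)] .
    have x2: "\<bar>?X 2 \<xi>\<bar> \<le> 2 * norm ?d" using bnd_dir[OF sm db M b z chx(1) chx(2)] .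
    have t1: "\<bar>(\<tau> - ?\<eta> \<xi>)$1\<bar> \<le> \<rho>" using component_le_norm_cart[of "\<tau> - ?\<eta> \<xi>" 1] chx(3) by linarith
    have t2: "\<bar>(\<tau> - ?\<eta> \<xi>)$2\<bar> \<le> \<rho>" using component_le_norm_cart[of "\<tau> - ?\<eta> \<xi>" 2] chx(3) by linarith
    have "\<bar>(\<tau> - ?\<eta> \<xi>)$1 * ?X 1 \<xi>\<bar> \<le> \<rho> * (2 * norm ?d)"
      unfolding abs_mult by (rule mult_mono[OF t1 x1]) (use t1 in auto)
    moreover have "\<bar>(\<tau> - ?\<eta> \<xi>)$2 * ?X 2 \<xi>\<bar> \<le> \<rho> * (2 * norm ?d)"
      unfolding abs_mult by (rule mult_mono[OF t2 x2]) (use t2 in auto)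
    ultimately show ?thesis
      using abs_triangle_ineq[of "(\<tau> - ?\<eta> \<xi>)$1 * ?X 1 \<xi>" "(\<tau> - ?\<eta> \<xi>)$2 * ?X 2 \<xi>"] by linarith
  qed
  finally have "\<bar>?g 1 - ?g 0\<bar> \<le> 4 * \<rho> * norm ?d" using \<xi>(3) by simp
  then show ?thesis by (simp add: algebra_simps)
qed



lemma arc_self: "norm (\<theta>::real^2) = 1 \<Longrightarrow> 0 \<le> a \<Longrightarrow> \<theta> \<in> arc \<theta> a"
  unfolding arc_def by (simp add: dot_square_norm)

lemma arc_close:
  assumes v: "norm (v::real^2) = 1" and c: "norm c = 1" and va: "v \<in> arc c a"
  shows "norm (v - c) \<le> a / 2"
proof -
  have vv: "v \<bullet> v = 1" "c \<bullet> c = 1" using v c by (simp_all add: dot_square_norm)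
  have cs: "\<bar>v \<bullet> c\<bar> \<le> 1" using Cauchy_Schwarz_ineq2[of v c] v c by simp
  define t where "t = arccos (v \<bullet> c)"
  have t: "cos t = v \<bullet> c" "0 \<le> t" "t \<le> a / 2"
    using cs va arccos_bounded[of "v \<bullet> c"] by (auto simp: t_def arc_def)
  have "(norm (v - c))^2 = 2 - 2 * (v \<bullet> c)"
    by (simp add: power2_norm_eq_inner inner_diff_left inner_diff_right inner_commute vv)
  also have "\<dots> = 4 * (sin (t / 2))^2" using cos_double_sin[of "t / 2"] t(1) by simp
  also have "\<dots> \<le> 4 * (t / 2)^2"
  proof -
    have "\<bar>sin (t / 2)\<bar>^2 \<le> \<bar>t / 2\<bar>^2" by (rule power_mono[OF abs_sin_x_le_abs_x]) simp
    then show ?thesis using t(2) by simp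
  qed
  also have "\<dots> = t^2" by (simp add: power2_eq_square)
  finally have "norm (v - c) \<le> t" using t(2) by (rule power2_le_imp_le)
  then show ?thesis using t(3) by simp
qed

lemma geom:
  assumes \<tau>: "norm (\<tau>::real^2) = 1" and t1: "norm \<theta>1 = 1" and t2: "norm \<theta>2 = 1"
  and A: "0 < A" "A \<le> 1"
  and a1: "\<theta>1 \<in> arc \<tau> A" and a2: "\<theta>2 \<in> arc \<tau> A" and sub: "arc \<tau> A \<subseteq> ball e2 \<epsilon>0"
  shows "norm (\<theta>1 - \<theta>2) \<le> A"
    "\<And>s. 0 \<le> s \<Longrightarrow> s \<le> 1 \<Longrightarrow> \<theta>2 + s *\<^sub>R (\<theta>1 - \<theta>2) \<in> ball e2 \<epsilon>0 \<and> \<theta>2 + s *\<^sub>R (\<theta>1 - \<theta>2) \<noteq> 0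
      \<and> norm (\<tau> - (\<theta>2 + s *\<^sub>R (\<theta>1 - \<theta>2))) \<le> A / 2"
proof -
  have c1: "norm (\<theta>1 - \<tau>) \<le> A / 2" by (rule arc_close[OF t1 \<tau> a1])
  have c2: "norm (\<theta>2 - \<tau>) \<le> A / 2" by (rule arc_close[OF t2 \<tau> a2])
  have "norm (\<theta>1 - \<theta>2) \<le> norm (\<theta>1 - \<tau>) + norm (\<theta>2 - \<tau>)"
    using norm_triangle_ineq4[of "\<theta>1 - \<tau>" "\<theta>2 - \<tau>"] by simp
  then show "norm (\<theta>1 - \<theta>2) \<le> A" using c1 c2 by simp
  fix s :: real assume s: "0 \<le> s" "s \<le> 1"
  have e: "\<theta>2 + s *\<^sub>R (\<theta>1 - \<theta>2) = (1 - s) *\<^sub>R \<theta>2 + s *\<^sub>R \<theta>1" by (simp add: algebra_simps)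
  have "\<theta>2 + s *\<^sub>R (\<theta>1 - \<theta>2) \<in> ball e2 \<epsilon>0"
    unfolding e using sub a1 a2 s by (intro convexD[OF convex_ball]) auto
  moreover have n: "norm (\<tau> - (\<theta>2 + s *\<^sub>R (\<theta>1 - \<theta>2))) \<le> A / 2"
  proof -
    have "\<tau> - (\<theta>2 + s *\<^sub>R (\<theta>1 - \<theta>2)) = - ((1 - s) *\<^sub>R (\<theta>2 - \<tau>) + s *\<^sub>R (\<theta>1 - \<tau>))"
      by (simp add: algebra_simps)
    then have "norm (\<tau> - (\<theta>2 + s *\<^sub>R (\<theta>1 - \<theta>2))) \<le> (1 - s) * norm (\<theta>2 - \<tau>) + s * norm (\<theta>1 - \<tau>)"
      using norm_triangle_ineq[of "(1 - s) *\<^sub>R (\<theta>2 - \<tau>)" "s *\<^sub>R (\<theta>1 - \<tau>)"] s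
      by (simp only: norm_minus_cancel) simp
    also have "\<dots> \<le> (1 - s) * (A / 2) + s * (A / 2)"
      using s c1 c2 by (intro add_mono mult_left_mono) auto
    also have "\<dots> = A / 2" by (simp add: field_simps)
    finally show ?thesis .
  qed
  moreover have "\<theta>2 + s *\<^sub>R (\<theta>1 - \<theta>2) \<noteq> 0"
  proof
    assume "\<theta>2 + s *\<^sub>R (\<theta>1 - \<theta>2) = 0"
    then have "norm \<tau> \<le> A / 2" using n by simp
    then show False using \<tau> A by simp
  qed
  ultimately show "\<theta>2 + s *\<^sub>R (\<theta>1 - \<theta>2) \<in> ball e2 \<epsilon>0 \<and> \<theta>2 + s *\<^sub>R (\<theta>1 - \<theta>2) \<noteq> 0
      \<and> norm (\<tau> - (\<theta>2 + s *\<^sub>R (\<theta>1 - \<theta>2))) \<le> A / 2" by blast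
qed



lemma comp_bound:
  fixes a b t1 t2 D1 D2 A \<sigma> Rp R :: real
  assumes a: "\<bar>a\<bar> \<le> \<sigma>^2 / 2" and b: "\<bar>b\<bar> \<le> \<sigma> * Rp / 2"
  and t1: "\<bar>t1\<bar> \<le> 1" and t2: "\<bar>t2\<bar> \<le> 1"
  and D1: "\<bar>D1\<bar> \<le> 2 * A" and D2: "\<bar>D2\<bar> \<le> 2 * A"
  and T: "\<bar>t1 * D1 + t2 * D2\<bar> \<le> 2 * A^2"
  and \<sigma>: "\<sigma> > 0" and Aeq: "A = inverse \<sigma> * Rp" and Rp: "Rp * Rp = 1 / R" "Rp > 0"
  shows "\<bar>(a * t1 + b * - t2) * D1 + (a * t2 + b * t1) * D2\<bar> \<le> 3 / R"
proof -
  have A0: "A > 0" using \<sigma> Rp Aeq by simp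
  have e: "(a * t1 + b * - t2) * D1 + (a * t2 + b * t1) * D2 = a * (t1 * D1 + t2 * D2) + b * (t1 * D2 - t2 * D1)"
    by (simp add: algebra_simps)
  have U: "\<bar>t1 * D2 - t2 * D1\<bar> \<le> 4 * A"
  proof -
    have "\<bar>t1 * D2\<bar> \<le> 1 * (2 * A)" unfolding abs_mult by (rule mult_mono) (use t1 D2 in auto)
    moreover have "\<bar>t2 * D1\<bar> \<le> 1 * (2 * A)" unfolding abs_mult by (rule mult_mono) (use t2 D1 in auto)
    ultimately show ?thesis using abs_triangle_ineq4[of "t1 * D2" "t2 * D1"] by linarith
  qed
  have sA: "\<sigma> * A = Rp" using \<sigma> Aeq by simp
  have "\<bar>a * (t1 * D1 + t2 * D2)\<bar> \<le> (\<sigma>^2 / 2) * (2 * A^2)"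
    unfolding abs_mult by (rule mult_mono) (use a T in auto)
  also have "\<dots> = (\<sigma> * A) * (\<sigma> * A)" by (simp add: power2_eq_square)
  also have "\<dots> = 1 / R" using sA Rp by simp
  finally have I: "\<bar>a * (t1 * D1 + t2 * D2)\<bar> \<le> 1 / R" .
  have "\<bar>b * (t1 * D2 - t2 * D1)\<bar> \<le> (\<sigma> * Rp / 2) * (4 * A)"
    unfolding abs_mult by (rule mult_mono) (use b U in auto)
  also have "\<dots> = 2 * ((\<sigma> * A) * Rp)" by simp
  also have "\<dots> = 2 / R" using sA Rp by simp
  finally have II: "\<bar>b * (t1 * D2 - t2 * D1)\<bar> \<le> 2 / R" .
  show ?thesis unfolding e using I II abs_triangle_ineq[of "a * (t1 * D1 + t2 * D2)" "b * (t1 * D2 - t2 * D1)"]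
    by (simp add: add_divide_distrib[symmetric])
qed



lemma main_bound:
  assumes sm: "smooth_phase \<phi>" and hom: "homog1 \<phi>"
    and db: "deriv_bounds 3 \<epsilon>0 \<phi>"
    and R1: "1 \<le> R" and Rl: "R \<le> lam" and s1: "R powr (-1/2) \<le> \<sigma>" and s2: "\<sigma> \<le> 1"
    and \<tau>: "norm \<tau> = 1" and sub: "arc \<tau> (inverse \<sigma> * R powr (-1/2)) \<subseteq> ball e2 \<epsilon>0"
    and t1: "norm \<theta>1 = 1" and a1: "arc \<theta>1 (R powr (-1/2)) \<subseteq> arc \<tau> (inverse \<sigma> * R powr (-1/2))"
    and t2: "norm \<theta>2 = 1" and a2: "arc \<theta>2 (R powr (-1/2)) \<subseteq> arc \<tau> (inverse \<sigma> * R powr (-1/2))"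
    and z: "(1 / lam) *\<^sub>R xt_of y \<in> ball 0 \<epsilon>0" and wT: "w \<in> Theta R \<sigma> \<tau>"
  shows "norm (w v* Jac \<phi> lam \<theta>1 y - w v* Jac \<phi> lam \<theta>2 y) \<le> 9 / R"
proof -
  define Rp where "Rp = R powr (-1/2)"
  define A where "A = inverse \<sigma> * Rp"
  define z0 where "z0 = (1 / lam) *\<^sub>R xt_of y"
  have Rp: "Rp > 0" using R1 by (simp add: Rp_def)
  have Rp2: "Rp * Rp = 1 / R"
  proof -
    have "Rp * Rp = R powr (-1/2 + -1/2)" unfolding Rp_def by (rule powr_add[symmetric])
    also have "\<dots> = 1 / R" using R1 by (simp add: powr_minus_divide)
    finally show ?thesis .
  qed
  have \<sigma>0: "\<sigma> > 0" using s1 Rp unfolding Rp_def by linarith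
  have A0: "A > 0" using \<sigma>0 Rp by (simp add: A_def)
  have A1: "A \<le> 1" using s1 \<sigma>0 by (simp add: A_def Rp_def field_simps)
  have lam: "lam > 0" using R1 Rl by simp
  have th1: "\<theta>1 \<noteq> 0" and th2: "\<theta>2 \<noteq> 0" using t1 t2 by auto
  have m1: "\<theta>1 \<in> arc \<tau> A" using a1 arc_self[OF t1, of Rp] Rp by (auto simp: A_def Rp_def)
  have m2: "\<theta>2 \<in> arc \<tau> A" using a2 arc_self[OF t2, of Rp] Rp by (auto simp: A_def Rp_def)
  have sub': "arc \<tau> A \<subseteq> ball e2 \<epsilon>0" using sub by (simp add: A_def Rp_def)
  note G = geom[OF \<tau> t1 t2 A0 A1 m1 m2 sub']
  obtain a b c where w: "w = vector [a * \<tau> $ 1 + b * perp \<tau> $ 1, a * \<tau> $ 2 + b * perp \<tau> $ 2, c]"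
    and ab: "\<bar>a\<bar> \<le> \<sigma>^2 / 2" "\<bar>b\<bar> \<le> \<sigma> * Rp / 2"
    using wT unfolding Theta_def Rp_def by blast
  have comp: "\<bar>(w v* Jac \<phi> lam \<theta>1 y - w v* Jac \<phi> lam \<theta>2 y) $ k\<bar> \<le> 3 / R" for k
  proof -
    let ?b = "(xt_of (axis k 1), 0::real^2)"
    let ?D = "\<lambda>j \<theta>. dderiv [?b, (0, axis j 1)] (phiP \<phi>) (z0, \<theta>)"
    have bB: "?b \<in> Basis" by (rule xt_basis)
    have b0: "snd ?b = 0" by simp
    have z': "z0 \<in> ball 0 \<epsilon>0" using z by (simp add: z0_def)
    have e: "(w v* Jac \<phi> lam \<theta>1 y - w v* Jac \<phi> lam \<theta>2 y) $ k
        = (a * \<tau>$1 + b * - \<tau>$2) * (?D 1 \<theta>1 - ?D 1 \<theta>2) + (a * \<tau>$2 + b * \<tau>$1) * (?D 2 \<theta>1 - ?D 2 \<theta>2)"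
      using row_entry[OF sm th1 lam, of w y k] row_entry[OF sm th2 lam, of w y k]
      by (simp add: w perp_def z0_def algebra_simps del: dderiv.simps)
    have ch1: "\<And>s. 0 \<le> s \<Longrightarrow> s \<le> 1 \<Longrightarrow> \<theta>2 + s *\<^sub>R (\<theta>1 - \<theta>2) \<in> ball e2 \<epsilon>0 \<and> \<theta>2 + s *\<^sub>R (\<theta>1 - \<theta>2) \<noteq> 0"
      using G(2) by blast
    have D1: "\<bar>?D 1 \<theta>1 - ?D 1 \<theta>2\<bar> \<le> 2 * A"
      using core1[OF sm db _ bB z' ch1, of 1] G(1) by simp
    have D2: "\<bar>?D 2 \<theta>1 - ?D 2 \<theta>2\<bar> \<le> 2 * A"
      using core1[OF sm db _ bB z' ch1, of 2] G(1) by simp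
    have T0: "\<bar>\<tau>$1 * (?D 1 \<theta>1 - ?D 1 \<theta>2) + \<tau>$2 * (?D 2 \<theta>1 - ?D 2 \<theta>2)\<bar> \<le> 4 * (A / 2) * norm (\<theta>1 - \<theta>2)"
      by (rule core2[OF sm hom db _ bB b0 z' G(2)]) simp
    have "4 * (A / 2) * norm (\<theta>1 - \<theta>2) \<le> 4 * (A / 2) * A"
      using G(1) A0 by (intro mult_left_mono) auto
    then have T: "\<bar>\<tau>$1 * (?D 1 \<theta>1 - ?D 1 \<theta>2) + \<tau>$2 * (?D 2 \<theta>1 - ?D 2 \<theta>2)\<bar> \<le> 2 * A^2"
      using T0 by (simp add: power2_eq_square)
    have tt1: "\<bar>\<tau>$1\<bar> \<le> 1" and tt2: "\<bar>\<tau>$2\<bar> \<le> 1" using component_le_norm_cart[of \<tau>] \<tau> by auto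
    show ?thesis unfolding e
      by (rule comp_bound[OF ab tt1 tt2 D1 D2 T \<sigma>0 A_def Rp2 Rp])
  qed
  have "norm (w v* Jac \<phi> lam \<theta>1 y - w v* Jac \<phi> lam \<theta>2 y) \<le> (\<Sum>k\<in>UNIV. \<bar>(w v* Jac \<phi> lam \<theta>1 y - w v* Jac \<phi> lam \<theta>2 y) $ k\<bar>)"
    by (rule norm_le_l1_cart)
  also have "\<dots> \<le> (\<Sum>k\<in>(UNIV::3 set). 3 / R)" by (rule sum_mono) (rule comp)
  also have "\<dots> = 9 / R" by (simp add: sum_3)
  finally show ?thesis .
qed


theorem lemma4p1:
  shows "\<exists>(M::nat) (C::real). \<forall>\<epsilon>0 \<phi> R lam \<sigma> \<tau> y w \<theta>1 \<theta>2.
     \<epsilon>0 > 0 \<and> smooth_phase \<phi> \<and> homog1 \<phi> \<and> rank_condition \<epsilon>0 \<phi> \<and> deriv_bounds M \<epsilon>0 \<phi>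
     \<and> 1 \<le> R \<and> R \<le> lam
     \<and> dyadic \<sigma> \<and> R powr (-1/2) \<le> \<sigma> \<and> \<sigma> \<le> 1
     \<and> norm \<tau> = 1 \<and> arc \<tau> (inverse \<sigma> * R powr (-1/2)) \<subseteq> ball e2 \<epsilon>0
     \<and> norm \<theta>1 = 1 \<and> arc \<theta>1 (R powr (-1/2)) \<subseteq> arc \<tau> (inverse \<sigma> * R powr (-1/2))
     \<and> norm \<theta>2 = 1 \<and> arc \<theta>2 (R powr (-1/2)) \<subseteq> arc \<tau> (inverse \<sigma> * R powr (-1/2))
     \<and> (1 / lam) *\<^sub>R xt_of y \<in> ball 0 \<epsilon>0
     \<and> w \<in> Theta R \<sigma> \<tau>
     \<longrightarrow> norm (w v* Jac \<phi> lam \<theta>1 y - w v* Jac \<phi> lam \<theta>2 y) \<le> C / R"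
  apply (intro exI[of _ "3::nat"] exI[of _ "9::real"] allI impI)
  apply (elim conjE)
  apply (rule main_bound)
                 apply assumption+
  done

end
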